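(* Let $n\ge 2$ be an integer and let $Q_{4n}=\langle x,y : x^{2n}=1,\ x^n=y^2,\ yx=x^{-1}y\rangle$ be the generalized quaternion group of order $4n$. Let $\Gamma_{Q_{4n}}$ be its non-commuting graph. Let $t_1,t_2$ be the two roots of the equation $(2n-2)x^2+(-4n+10)x-2n=0$. Then the spectrum of the distance signless Laplacian matrix $D^Q(\Gamma_{Q_{4n}})$ (eigenvalues counted with multiplicity, multiplicities being added if two of the listed values coincide) consists of: (a) $4n-4$ with multiplicity $n$; (b) $6n-8$ with multiplicity $2n-3$; (c) $4n-2$ with multiplicity $n-1$; (d) $t_k(2n-2)+(6n-2)$ with multiplicity $1$, for each $k=1,2$.
   Context: For a finite non-abelian group $G$ with centre $Z(G)$, the non-commuting graph $\Gamma_G$ is the simple undirected graph with vertex set $G\setminus Z(G)$, in which two distinct vertices $u,v$ are adjacent if and only if $uv\ne vu$. For a connected graph $H$, $d_{uv}$ denotes the length of a shortest path between $u$ and $v$; the distance matrix $D(H)$ has $(u,v)$-entry $d_{uv}$. The transmission of a vertex $v$ is $\sum_{u} d_{uv}$, and $Tr(H)$ is the diagonal matrix of vertex transmissions. The distance signless Laplacian matrix is $D^Q(H)=Tr(H)+D(H)$. *)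

theory Defs
  imports "HOL-Algebra.Generated_Groups" "Jordan_Normal_Form.Char_Poly"
begin

definition group_center :: "('a, 'b) monoid_scheme \<Rightarrow> 'a set" where
  "group_center G = {z \<in> carrier G. \<forall>g \<in> carrier G. z \<otimes>\<^bsub>G\<^esub> g = g \<otimes>\<^bsub>G\<^esub> z}"

definition nc_vertices :: "('a, 'b) monoid_scheme \<Rightarrow> 'a set" where
  "nc_vertices G = carrier G - group_center G"

definition nc_adj :: "('a, 'b) monoid_scheme \<Rightarrow> 'a \<Rightarrow> 'a \<Rightarrow> bool" where
  "nc_adj G u v \<longleftrightarrow> u \<in> nc_vertices G \<and> v \<in> nc_vertices G \<and> u \<noteq> v
     \<and> u \<otimes>\<^bsub>G\<^esub> v \<noteq> v \<otimes>\<^bsub>G\<^esub> u"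

definition has_walk :: "'a set \<Rightarrow> ('a \<Rightarrow> 'a \<Rightarrow> bool) \<Rightarrow> 'a \<Rightarrow> 'a \<Rightarrow> nat \<Rightarrow> bool" where
  "has_walk V E u v k \<longleftrightarrow> (\<exists>p. length p = Suc k \<and> hd p = u \<and> last p = v \<and> set p \<subseteq> V
      \<and> (\<forall>i<k. E (p ! i) (p ! Suc i)))"

definition graph_dist :: "'a set \<Rightarrow> ('a \<Rightarrow> 'a \<Rightarrow> bool) \<Rightarrow> 'a \<Rightarrow> 'a \<Rightarrow> nat" where
  "graph_dist V E u v = (LEAST k. has_walk V E u v k)"

definition transmission :: "'a set \<Rightarrow> ('a \<Rightarrow> 'a \<Rightarrow> bool) \<Rightarrow> 'a \<Rightarrow> nat" where
  "transmission V E v = (\<Sum>u\<in>V. graph_dist V E u v)"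

definition dist_signless_laplacian ::
    "'a set \<Rightarrow> ('a \<Rightarrow> 'a \<Rightarrow> bool) \<Rightarrow> 'a list \<Rightarrow> real mat" where
  "dist_signless_laplacian V E vs = mat (length vs) (length vs) (\<lambda>(i, j).
      (if i = j then real (transmission V E (vs ! i)) else 0)
      + real (graph_dist V E (vs ! i) (vs ! j)))"

definition poly_of_roots :: "real multiset \<Rightarrow> real poly" where
  "poly_of_roots M = prod_mset (image_mset (\<lambda>a. [:- a, 1:]) M)"

end

theory Submission
  imports Defs
begin
lemma sim_char_poly:
  fixes A P T :: "'a :: field mat"
  assumes A: "A \<in> carrier_mat N N" and P: "P \<in> carrier_mat N N" and T: "T \<in> carrier_mat N N"
    and dP: "det P \<noteq> 0" and AP: "A * P = P * T"
  shows "char_poly A = char_poly T"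
proof -
  from det_non_zero_imp_unit[OF P dP, unfolded Units_def, of "()"]
  obtain Q where Q: "Q \<in> carrier_mat N N" and QP: "Q * P = 1\<^sub>m N" and PQ: "P * Q = 1\<^sub>m N"
    by (auto simp: ring_mat_def)
  have "A = A * (P * Q)" using A PQ by simp
  also have "\<dots> = (A * P) * Q" using A P Q by (simp add: assoc_mult_mat)
  also have "\<dots> = P * T * Q" using AP by simp
  finally have "A = P * T * Q" .
  hence "similar_mat_wit A T P Q" unfolding similar_mat_wit_def Let_def
    using A P Q T PQ QP by auto
  hence "similar_mat A T" unfolding similar_mat_def by blast
  thus ?thesis by (rule char_poly_similar)
qed

lemma perm_char_poly:
  fixes f :: "nat \<Rightarrow> nat \<Rightarrow> 'a :: field"
  assumes bij: "bij_betw \<sigma> {..<N} {..<N}"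
  shows "char_poly (mat N N (\<lambda>(i,j). f (\<sigma> i) (\<sigma> j))) = char_poly (mat N N (\<lambda>(i,j). f i j))"
proof -
  let ?A = "mat N N (\<lambda>(i,j). f i j)"
  let ?B = "mat N N (\<lambda>(i,j). f (\<sigma> i) (\<sigma> j))"
  define Pm :: "'a mat" where "Pm = mat N N (\<lambda>(i,j). if \<sigma> i = j then 1 else 0)"
  define Qm :: "'a mat" where "Qm = mat N N (\<lambda>(i,j). if i = \<sigma> j then 1 else 0)"
  have sl: "\<And>i. i < N \<Longrightarrow> \<sigma> i < N" using bij by (auto simp: bij_betw_def)
  have inj: "\<And>i j. i < N \<Longrightarrow> j < N \<Longrightarrow> \<sigma> i = \<sigma> j \<Longrightarrow> i = j" using bij
    by (auto simp: bij_betw_def inj_on_def)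
  have sur: "\<And>k. k < N \<Longrightarrow> \<exists>i<N. \<sigma> i = k" using bij
    by (metis bij_betw_iff_bijections lessThan_iff)
  have PA: "Pm * ?A = mat N N (\<lambda>(i,j). f (\<sigma> i) j)"
  proof (rule eq_matI)
    fix i j assume i: "i < dim_row (mat N N (\<lambda>(i,j). f (\<sigma> i) j))" and j: "j < dim_col (mat N N (\<lambda>(i,j). f (\<sigma> i) j))"
    hence "(Pm * ?A) $$ (i,j) = (\<Sum>k\<in>{0..<N}. (if \<sigma> i = k then 1 else 0) * f k j)"
      by (simp add: Pm_def scalar_prod_def)
    also have "\<dots> = (\<Sum>k\<in>{0..<N}. (if \<sigma> i = k then f k j else 0))"
      by (rule sum.cong) auto
    also have "\<dots> = f (\<sigma> i) j" using sl[of i] i by (simp add: sum.delta)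
    finally show "(Pm * ?A) $$ (i,j) = mat N N (\<lambda>(i,j). f (\<sigma> i) j) $$ (i,j)" using i j by simp
  qed (auto simp: Pm_def)
  have PAQ: "Pm * ?A * Qm = ?B"
  proof (rule eq_matI)
    fix i j assume i: "i < dim_row ?B" and j: "j < dim_col ?B"
    hence "(Pm * ?A * Qm) $$ (i,j) = (\<Sum>k\<in>{0..<N}. f (\<sigma> i) k * (if k = \<sigma> j then 1 else 0))"
      unfolding PA by (simp add: Qm_def scalar_prod_def)
    also have "\<dots> = (\<Sum>k\<in>{0..<N}. (if \<sigma> j = k then f (\<sigma> i) k else 0))"
      by (rule sum.cong) auto
    also have "\<dots> = f (\<sigma> i) (\<sigma> j)" using sl[of j] j by (simp add: sum.delta)
    finally show "(Pm * ?A * Qm) $$ (i,j) = ?B $$ (i,j)" using i j by simp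
  qed (auto simp: Pm_def Qm_def PA)
  have PQ: "Pm * Qm = 1\<^sub>m N"
  proof (rule eq_matI)
    fix i j assume i: "i < dim_row (1\<^sub>m N :: 'a mat)" and j: "j < dim_col (1\<^sub>m N :: 'a mat)"
    hence "(Pm * Qm) $$ (i,j) = (\<Sum>k\<in>{0..<N}. (if \<sigma> i = k then 1 else 0) * (if k = \<sigma> j then 1 else (0::'a)))"
      by (simp add: Pm_def Qm_def scalar_prod_def)
    also have "\<dots> = (\<Sum>k\<in>{0..<N}. (if \<sigma> i = k then (if k = \<sigma> j then 1 else 0) else 0))"
      by (rule sum.cong) auto
    also have "\<dots> = (if \<sigma> i = \<sigma> j then 1 else 0)" using sl[of i] i by (simp add: sum.delta)
    also have "\<dots> = (1\<^sub>m N :: 'a mat) $$ (i,j)" using i j inj[of i j] by auto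
    finally show "(Pm * Qm) $$ (i,j) = (1\<^sub>m N :: 'a mat) $$ (i,j)" .
  qed (auto simp: Pm_def Qm_def)
  have QP: "Qm * Pm = 1\<^sub>m N"
  proof (rule eq_matI)
    fix i j assume i: "i < dim_row (1\<^sub>m N :: 'a mat)" and j: "j < dim_col (1\<^sub>m N :: 'a mat)"
    obtain k0 where k0: "k0 < N" "\<sigma> k0 = i" using sur[of i] i by auto
    hence "(Qm * Pm) $$ (i,j) = (\<Sum>k\<in>{0..<N}. (if i = \<sigma> k then 1 else 0) * (if \<sigma> k = j then 1 else (0::'a)))"
      using i j by (simp add: Pm_def Qm_def scalar_prod_def)
    also have "\<dots> = (\<Sum>k\<in>{0..<N}. (if k0 = k then (if i = j then 1 else 0) else 0))"
      using k0 inj by (intro sum.cong) auto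
    also have "\<dots> = (1\<^sub>m N :: 'a mat) $$ (i,j)" using i j k0 by (simp add: sum.delta)
    finally show "(Qm * Pm) $$ (i,j) = (1\<^sub>m N :: 'a mat) $$ (i,j)" .
  qed (auto simp: Pm_def Qm_def)
  have "similar_mat_wit ?B ?A Pm Qm" unfolding similar_mat_wit_def Let_def
    using PQ QP PAQ by (auto simp: Pm_def Qm_def)
  hence "similar_mat ?B ?A" unfolding similar_mat_def by blast
  thus ?thesis by (rule char_poly_similar)
qed

definition ind :: "bool \<Rightarrow> real" where "ind P = (if P then 1 else 0)"

lemma ind_simps[simp]: "ind True = 1" "ind False = 0" by (auto simp: ind_def)

lemma sum_ind_eq: "s < (N::nat) \<Longrightarrow> (\<Sum>k = 0..<N. g k * ind (k = s)) = g s"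
proof -
  assume s: "s < N"
  have "(\<Sum>k = 0..<N. g k * ind (k = s)) = (\<Sum>k \<in> {0..<N}. if k = s then g k else 0)"
    by (rule sum.cong) (auto simp: ind_def)
  also have "\<dots> = g s" using s by (subst sum.delta) auto
  finally show ?thesis .
qed

lemma sum_ind_eq': "(\<Sum>k = 0..<(N::nat). ind (k = s)) = ind (s < N)"
  using sum_ind_eq[of s N "\<lambda>_. 1"] by (cases "s < N") (auto simp: ind_def)

lemma sum_ind_lt: "a \<le> (N::nat) \<Longrightarrow> (\<Sum>k = 0..<N. g k * ind (k < a)) = (\<Sum>k = 0..<a. g k)"
proof -
  assume a: "a \<le> N"
  have "(\<Sum>k = 0..<N. g k * ind (k < a)) = (\<Sum>k \<in> {0..<N}. if k < a then g k else 0)"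
    by (rule sum.cong) (auto simp: ind_def)
  also have "\<dots> = (\<Sum>k \<in> {x\<in>{0..<N}. x < a}. g k)"
    by (rule sum.inter_filter[symmetric]) simp
  also have "{x\<in>{0..<N}. x < a} = {0..<a}" using a by auto
  finally show ?thesis .
qed

lemma sum_ind_ge: "(\<Sum>k = 0..<(N::nat). ind (a \<le> k)) = real (N - a)"
proof -
  have "(\<Sum>k = 0..<N. ind (a \<le> k)) = (\<Sum>k \<in> {0..<N}. if a \<le> k then 1 else 0)"
    by (rule sum.cong) (auto simp: ind_def)
  also have "\<dots> = (\<Sum>k \<in> {x\<in>{0..<N}. a \<le> x}. 1)"
    by (rule sum.inter_filter[symmetric]) simp
  also have "{x\<in>{0..<N}. a \<le> x} = {a..<N}" by auto
  finally show ?thesis by simp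
qed

locale qm =
  fixes n :: nat and b l1 l2 :: real
  assumes n2: "n \<ge> 2"
    and A1: "(l1 - (6 * real n - 2)) * b = 1"
    and A2: "l1 = 10 * real n - 12 + 2 * real n * (2 * real n - 2) * b"
    and A3: "l2 = 6 * real n - 2 - 2 * real n * (2 * real n - 2) * b"
begin

abbreviation "m \<equiv> 2 * n - 2"
abbreviation "N \<equiv> 4 * n - 2"
abbreviation "rm \<equiv> 2 * real n - 2"

definition par :: "nat \<Rightarrow> nat" where "par i = (if i < m + n then i + n else i - n)"

definition tr0 :: "nat \<Rightarrow> real" where "tr0 i = (if i < m then 6 * real n - 6 else 4 * real n - 2)"

definition d0 :: "nat \<Rightarrow> nat \<Rightarrow> real" where
  "d0 i k = 1 + ind (i < m \<and> k < m \<and> i \<noteq> k) + ind (m \<le> i \<and> m \<le> k \<and> k = par i) - ind (i = k)"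

definition me :: "nat \<Rightarrow> nat \<Rightarrow> real" where "me i k = ind (i = k) * tr0 i + d0 i k"

lemma rowsum: assumes i: "i < N"
  shows "(\<Sum>k = 0..<N. me i k * v k) = tr0 i * v i + (\<Sum>k = 0..<N. v k)
     + ind (i < m) * ((\<Sum>k = 0..<m. v k) - v i) + ind (m \<le> i) * v (par i) - v i"
proof -
  have mN: "m \<le> N" by simp
  have pN: "m \<le> i \<Longrightarrow> par i < N" using i n2 unfolding par_def by auto
  have pN2: "m \<le> i \<Longrightarrow> m \<le> par i" using i n2 unfolding par_def by auto
  have "(\<Sum>k = 0..<N. me i k * v k) = (\<Sum>k = 0..<N. tr0 i * (v k * ind (k = i)) + v k
     + ind (i < m) * (v k * ind (k < m) - v k * ind (k = i)) + ind (m \<le> i) * (v k * ind (k = par i))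
     - v k * ind (k = i))"
    using pN2 by (intro sum.cong, simp, auto simp: me_def d0_def ind_def algebra_simps)
  also have "\<dots> = tr0 i * v i + (\<Sum>k = 0..<N. v k)
     + ind (i < m) * ((\<Sum>k = 0..<m. v k) - v i) + ind (m \<le> i) * v (par i) - v i"
  proof (cases "m \<le> i")
    case True
    thus ?thesis using i pN pN2
      by (simp add: sum.distrib sum_subtractf sum_distrib_left[symmetric] sum_ind_eq sum_ind_lt mN)
  next
    case False
    thus ?thesis using i
      by (simp add: sum.distrib sum_subtractf sum_distrib_left[symmetric] sum_ind_eq sum_ind_lt mN)
  qed
  finally show ?thesis .
qed

definition pe :: "nat \<Rightarrow> nat \<Rightarrow> real" where
  "pe i j = (if j < m - 1 then ind (i = j) - ind (i = m - 1)
     else if j = m - 1 then ind (i = m - 1) + b * ind (m \<le> i)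
     else if j = m then ind (m \<le> i)
     else if j < m + n then ind (i = j) - ind (i = j + n)
     else if j = m + n then ind (m + n \<le> i)
     else if j < N - 1 then ind (i = j) - ind (i = j + 1)
     else ind (i = N - 1))"

lemma pe1: "j < m - 1 \<Longrightarrow> pe i j = ind (i = j) - ind (i = m - 1)" unfolding pe_def by auto
lemma pe2: "j = m - 1 \<Longrightarrow> pe i j = ind (i = m - 1) + b * ind (m \<le> i)" using n2 unfolding pe_def by auto
lemma pe3: "j = m \<Longrightarrow> pe i j = ind (m \<le> i)" using n2 unfolding pe_def by auto
lemma pe4: "m < j \<Longrightarrow> j < m + n \<Longrightarrow> pe i j = ind (i = j) - ind (i = j + n)" using n2 unfolding pe_def by auto
lemma pe5: "j = m + n \<Longrightarrow> pe i j = ind (m + n \<le> i)" using n2 unfolding pe_def by auto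
lemma pe6: "m + n < j \<Longrightarrow> j < N - 1 \<Longrightarrow> pe i j = ind (i = j) - ind (i = j + 1)" using n2 unfolding pe_def by auto
lemma pe7: "j = N - 1 \<Longrightarrow> pe i j = ind (i = N - 1)" using n2 unfolding pe_def by auto

definition tc :: "nat \<Rightarrow> real" where
  "tc j = (if j = m - 1 then 2 + 2 * real n * b else if j = m then 2 * real n
     else if j = m + n then real n else if j = N - 1 then 1 else 0)"

definition tl :: "nat \<Rightarrow> (nat \<times> real) list" where
  "tl j = (if j < m - 1 then [(j, 6 * real n - 8)]
     else if j = m - 1 then [(m - 1, l1)]
     else if j = m then [(m - 1, 2 * real n * rm), (m, l2)]
     else if j < m + n then [(j, 4 * real n - 4)]
     else if j = m + n then [(m - 1, real n * rm), (m, real n + 1 - real n * rm * b), (j, 4 * real n - 4)]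
     else if j < N - 1 then [(j, 4 * real n - 2), (j - n, 1), (j + 1 - n, -1)]
     else [(m - 1, rm), (m, 1 - rm * b), (m + n - 1, 1), (N - 1, 4 * real n - 2)])"

definition te :: "nat \<Rightarrow> nat \<Rightarrow> real" where
  "te k j = tc j * ind (k < m - 1) + sum_list (map (\<lambda>(s,c). c * ind (k = s)) (tl j))"

lemma tl_lt: "j < N \<Longrightarrow> (s, c) \<in> set (tl j) \<Longrightarrow> s < N"
  using n2 unfolding tl_def by (auto split: if_splits; arith)

lemma sum_list_ind_gen:
  assumes "\<And>s c. (s, c) \<in> set L \<Longrightarrow> s < N"
  shows "(\<Sum>k = 0..<(N::nat). g k * sum_list (map (\<lambda>(s,c). c * ind (k = s)) L))
       = sum_list (map (\<lambda>(s,c). c * g s) L)"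
  using assms
proof (induction L)
  case Nil thus ?case by simp
next
  case (Cons a L)
  obtain s c where a: "a = (s, c)" by force
  have s: "s < N" using Cons.prems a by auto
  have IH: "(\<Sum>k = 0..<N. g k * sum_list (map (\<lambda>(s,c). c * ind (k = s)) L)) = sum_list (map (\<lambda>(s,c). c * g s) L)"
    by (rule Cons.IH) (use Cons.prems in auto)
  have "(\<Sum>k = 0..<N. g k * sum_list (map (\<lambda>(s,c). c * ind (k = s)) (a # L)))
     = c * (\<Sum>k = 0..<N. g k * ind (k = s)) + (\<Sum>k = 0..<N. g k * sum_list (map (\<lambda>(s,c). c * ind (k = s)) L))"
    by (simp add: a algebra_simps sum.distrib sum_distrib_left)
  also have "\<dots> = c * g s + sum_list (map (\<lambda>(s,c). c * g s) L)"
    using IH s by (simp add: sum_ind_eq)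
  finally show ?case by (simp add: a)
qed

lemma PS: assumes i: "i < N" shows "(\<Sum>k = 0..<m - 1. pe i k) = ind (i < m - 1) - real (m - 1) * ind (i = m - 1)"
proof -
  have "(\<Sum>k = 0..<m - 1. pe i k) = (\<Sum>k = 0..<m - 1. ind (k = i) - ind (i = m - 1))"
    by (rule sum.cong) (auto simp: pe1 ind_def)
  also have "\<dots> = ind (i < m - 1) - real (m - 1) * ind (i = m - 1)"
    by (simp add: sum_subtractf sum_ind_eq')
  finally show ?thesis .
qed

lemma rhs: assumes i: "i < N" and j: "j < N"
  shows "(\<Sum>k = 0..<N. pe i k * te k j) = tc j * (ind (i < m - 1) - real (m - 1) * ind (i = m - 1))
     + sum_list (map (\<lambda>(s,c). c * pe i s) (tl j))"
proof -
  have "(\<Sum>k = 0..<N. pe i k * te k j) = tc j * (\<Sum>k = 0..<N. pe i k * ind (k < m - 1))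
     + (\<Sum>k = 0..<N. pe i k * sum_list (map (\<lambda>(s,c). c * ind (k = s)) (tl j)))"
    by (simp add: te_def algebra_simps sum.distrib sum_distrib_left)
  also have "\<dots> = tc j * (ind (i < m - 1) - real (m - 1) * ind (i = m - 1))
     + sum_list (map (\<lambda>(s,c). c * pe i s) (tl j))"
    using i tl_lt[OF j] sum_ind_lt[of "m - 1" N "pe i"] PS[OF i] sum_list_ind_gen[of "tl j" "pe i"] by simp
  finally show ?thesis .
qed

lemma jcases:
  assumes "j < N"
  obtains (c1) "j < m - 1" | (c2) "j = m - 1" | (c3) "j = m" | (c4) "m < j" "j < m + n"
    | (c5) "j = m + n" | (c6) "m + n < j" "j < N - 1" | (c7) "j = N - 1"
proof -
  have "j < m - 1 \<or> j = m - 1 \<or> j = m \<or> (m < j \<and> j < m + n) \<or> j = m + n \<or> (m + n < j \<and> j < N - 1) \<or> j = N - 1"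
    using assms n2 by linarith
  thus ?thesis using that by blast
qed

lemma sumN: assumes j: "j < N"
  shows "(\<Sum>k = 0..<N. pe k j) = (if j = m - 1 then 1 + 2 * real n * b else if j = m then 2 * real n
     else if j = m + n then real n else if j = N - 1 then 1 else 0)"
  using j
proof (cases rule: jcases)
  case c1 thus ?thesis using n2 by (simp add: pe1 sum_subtractf sum_ind_eq') (auto simp: ind_def)
next
  case c2 thus ?thesis using n2 by (simp add: pe2 sum.distrib sum_ind_eq' sum_distrib_left[symmetric] sum_ind_ge) (auto simp: ind_def)
next
  case c3 thus ?thesis using n2 by (simp add: pe3 sum_ind_ge) (auto simp: ind_def)
next
  case c4 thus ?thesis using n2 by (simp add: pe4 sum_subtractf sum_ind_eq') (auto simp: ind_def)
next
  case c5 thus ?thesis using n2 by (simp add: pe5 sum_ind_ge) (auto simp: ind_def)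
next
  case c6 thus ?thesis using n2 by (simp add: pe6 sum_subtractf sum_ind_eq') (auto simp: ind_def)
next
  case c7 thus ?thesis using n2 by (simp add: pe7 sum_ind_eq') (auto simp: ind_def)
qed

lemma sumM: assumes j: "j < N"
  shows "(\<Sum>k = 0..<m. pe k j) = ind (j = m - 1)"
  using j
proof (cases rule: jcases)
  case c1 thus ?thesis using n2 by (simp add: pe1 sum_subtractf sum_ind_eq') (auto simp: ind_def)
next
  case c2 thus ?thesis using n2 by (simp add: pe2 sum.distrib sum_ind_eq' sum_distrib_left[symmetric] sum_ind_ge) (auto simp: ind_def)
next
  case c3 thus ?thesis using n2 by (simp add: pe3 sum_ind_ge) (auto simp: ind_def)
next
  case c4 thus ?thesis using n2 by (simp add: pe4 sum_subtractf sum_ind_eq') (auto simp: ind_def)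
next
  case c5 thus ?thesis using n2 by (simp add: pe5 sum_ind_ge) (auto simp: ind_def)
next
  case c6 thus ?thesis using n2 by (simp add: pe6 sum_subtractf sum_ind_eq') (auto simp: ind_def)
next
  case c7 thus ?thesis using n2 by (simp add: pe7 sum_ind_eq') (auto simp: ind_def)
qed

end

context qm begin

abbreviation "LHS i j \<equiv> tr0 i * pe i j + (\<Sum>k = 0..<N. pe k j) + ind (i < m) * ((\<Sum>k = 0..<m. pe k j) - pe i j) + ind (m \<le> i) * pe (par i) j - pe i j"
abbreviation "RHS i j \<equiv> tc j * (ind (i < m - 1) - real (m - 1) * ind (i = m - 1)) + sum_list (map (\<lambda>(s,c). c * pe i s) (tl j))"

lemma par_ge: "m \<le> i \<Longrightarrow> i < N \<Longrightarrow> m \<le> par i \<and> par i < N" using n2 unfolding par_def by auto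

lemma par_eq: "m \<le> i \<Longrightarrow> i < N \<Longrightarrow> m \<le> x \<Longrightarrow> x < N \<Longrightarrow> (par i = x) = (i = par x)"
  using n2 unfolding par_def by auto

lemma rm_eq: "real (m - 1) = 2 * real n - 3" using n2 by (simp add: of_nat_diff)

lemma col1: assumes i: "i < N" and j: "j < m - 1" shows "LHS i j = RHS i j"
proof -
  have jN: "j < N" using j by simp
  have ne: "j \<noteq> m - 1" "j \<noteq> m" "j \<noteq> m + n" "j \<noteq> N - 1" using j n2 by linarith+
  have sN: "(\<Sum>k = 0..<N. pe k j) = 0" "(\<Sum>k = 0..<m. pe k j) = 0"
    using sumN[OF jN] sumM[OF jN] ne by simp_all
  have tl: "tl j = [(j, 6 * real n - 8)]" "tc j = 0" using j unfolding tl_def tc_def by auto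
  show ?thesis
  proof (cases "i < m")
    case True thus ?thesis using j n2 unfolding sN tl
      by (simp add: tr0_def algebra_simps)
  next
    case False
    with par_ge[of i] i have "m \<le> par i" by auto
    hence "par i \<noteq> j" "par i \<noteq> m - 1" "i \<noteq> j" "i \<noteq> m - 1" using False j by linarith+
    thus ?thesis using j False n2 unfolding sN tl
      by (simp add: tr0_def pe1 algebra_simps)
  qed
qed

lemma E1: "b * l1 = 1 + (6 * real n - 2) * b" using A1 by (simp add: algebra_simps)

lemma icases: assumes "i < N" obtains (a) "i < m - 1" | (b) "i = m - 1" | (c) "m \<le> i"
proof -
  have "i < m - 1 \<or> i = m - 1 \<or> m \<le> i" using n2 by linarith
  thus ?thesis using that by blast
qed

lemma col2: assumes i: "i < N" and j: "j = m - 1" shows "LHS i j = RHS i j"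
proof -
  have jN: "j < N" using j n2 by simp
  have sN: "(\<Sum>k = 0..<N. pe k j) = 1 + 2 * real n * b" "(\<Sum>k = 0..<m. pe k j) = 1"
    using sumN[OF jN] sumM[OF jN] eqTrueI[OF j] by (simp_all only: if_True if_False simp_thms ind_simps)
  have tl: "tl j = [(m - 1, l1)]" "tc j = 2 + 2 * real n * b" using j unfolding tl_def tc_def by auto
  have pe: "pe x j = ind (x = m - 1) + b * ind (m \<le> x)" for x using pe2[OF j] .
  have pe': "pe x (m - 1) = ind (x = m - 1) + b * ind (m \<le> x)" for x using pe2 by simp
  show ?thesis using i
  proof (cases rule: icases)
    case a
    hence "i \<noteq> m - 1" "\<not> m \<le> i" "i < m" by linarith+
    thus ?thesis using a unfolding sN tl list.map prod.case sum_list.Cons sum_list.Nil unfolding pe' by (simp add: pe algebra_simps)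
  next
    case b
    hence "\<not> m \<le> i" "i < m" "\<not> i < m - 1" using n2 by linarith+
    thus ?thesis using b n2 unfolding sN tl list.map prod.case sum_list.Cons sum_list.Nil unfolding pe' by (simp add: pe algebra_simps tr0_def rm_eq A2)
  next
    case c
    with par_ge[of i] i have "m \<le> par i" by auto
    hence "par i \<noteq> m - 1" "i \<noteq> m - 1" "\<not> i < m" "\<not> i < m - 1" using c n2 by linarith+
    thus ?thesis using c \<open>m \<le> par i\<close> unfolding sN tl list.map prod.case sum_list.Cons sum_list.Nil unfolding pe' by (simp add: pe algebra_simps tr0_def E1)
  qed
qed

lemma col3: assumes i: "i < N" and j: "j = m" shows "LHS i j = RHS i j"
proof -
  have jN: "j < N" using j n2 by simp
  have ne: "j \<noteq> m - 1" using j n2 by linarith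
  have sN: "(\<Sum>k = 0..<N. pe k j) = 2 * real n" "(\<Sum>k = 0..<m. pe k j) = 0"
    using sumN[OF jN] sumM[OF jN] eqTrueI[OF j] ne by (simp_all only: if_True if_False simp_thms ind_simps)
  have tl: "tl j = [(m - 1, 2 * real n * rm), (m, l2)]" "tc j = 2 * real n" using j ne unfolding tl_def tc_def by auto
  have pe: "pe x j = ind (m \<le> x)" for x using pe3[OF j] .
  have pe': "pe x (m - 1) = ind (x = m - 1) + b * ind (m \<le> x)" for x using pe2 by simp
  have pe'': "pe x m = ind (m \<le> x)" for x using pe3 by simp
  show ?thesis using i
  proof (cases rule: icases)
    case a
    hence "i \<noteq> m - 1" "\<not> m \<le> i" "i < m" by linarith+
    thus ?thesis using a unfolding sN tl list.map prod.case sum_list.Cons sum_list.Nil unfolding pe' pe'' by (simp add: pe algebra_simps)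
  next
    case b
    hence "\<not> m \<le> i" "i < m" "\<not> i < m - 1" using n2 by linarith+
    thus ?thesis using b n2 unfolding sN tl list.map prod.case sum_list.Cons sum_list.Nil unfolding pe' pe'' by (simp add: pe algebra_simps tr0_def rm_eq)
  next
    case c
    with par_ge[of i] i have "m \<le> par i" by auto
    hence "par i \<noteq> m - 1" "i \<noteq> m - 1" "\<not> i < m" "\<not> i < m - 1" using c n2 by linarith+
    thus ?thesis using c \<open>m \<le> par i\<close> unfolding sN tl list.map prod.case sum_list.Cons sum_list.Nil unfolding pe' pe'' by (simp add: pe algebra_simps tr0_def A3)
  qed
qed

lemma col4: assumes i: "i < N" and j: "m < j" "j < m + n" shows "LHS i j = RHS i j"
proof -
  have jN: "j < N" using j n2 by simp
  have ne: "j \<noteq> m - 1" "j \<noteq> m" "j \<noteq> m + n" "j \<noteq> N - 1" using j n2 by linarith+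
  have sN: "(\<Sum>k = 0..<N. pe k j) = 0" "(\<Sum>k = 0..<m. pe k j) = 0"
    using sumN[OF jN] sumM[OF jN] ne by simp_all
  have tl: "tl j = [(j, 4 * real n - 4)]" "tc j = 0" using j ne unfolding tl_def tc_def by auto
  have pe: "pe x j = ind (x = j) - ind (x = j + n)" for x using pe4[OF j] .
  show ?thesis
  proof (cases "i < m")
    case True
    hence "i \<noteq> j" "i \<noteq> j + n" using j by linarith+
    thus ?thesis using True unfolding sN tl by (simp add: pe algebra_simps)
  next
    case False
    with par_ge[of i] i have pg: "m \<le> par i" "par i < N" by auto
    have "ind (par i = j) = ind (i = j + n)" "ind (par i = j + n) = ind (i = j)"
      using par_eq[of i j] par_eq[of i "j + n"] False i j n2 unfolding par_def by auto
    thus ?thesis using False unfolding sN tl by (simp add: pe algebra_simps tr0_def)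
  qed
qed

lemma col5: assumes i: "i < N" and j: "j = m + n" shows "LHS i j = RHS i j"
proof -
  have jN: "j < N" using j n2 by simp
  have ne: "j \<noteq> m - 1" "j \<noteq> m" using j n2 by linarith+
  have sN: "(\<Sum>k = 0..<N. pe k j) = real n" "(\<Sum>k = 0..<m. pe k j) = 0"
    using sumN[OF jN] sumM[OF jN] eqTrueI[OF j] ne by (simp_all only: if_True if_False simp_thms ind_simps)
  have tl: "tl j = [(m - 1, real n * rm), (m, real n + 1 - real n * rm * b), (j, 4 * real n - 4)]" "tc j = real n"
    using j ne unfolding tl_def tc_def by auto
  have pe: "pe x j = ind (m + n \<le> x)" for x using pe5[OF j] .
  have pe': "pe x (m - 1) = ind (x = m - 1) + b * ind (m \<le> x)" for x using pe2 by simp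
  have pe'': "pe x m = ind (m \<le> x)" for x using pe3 by simp
  show ?thesis using i
  proof (cases rule: icases)
    case a
    hence "i \<noteq> m - 1" "\<not> m \<le> i" "i < m" "\<not> m + n \<le> i" by linarith+
    thus ?thesis using a unfolding sN tl list.map prod.case sum_list.Cons sum_list.Nil unfolding pe' pe'' by (simp add: pe algebra_simps)
  next
    case b
    hence "\<not> m \<le> i" "i < m" "\<not> i < m - 1" "\<not> m + n \<le> i" using n2 by linarith+
    thus ?thesis using b n2 unfolding sN tl list.map prod.case sum_list.Cons sum_list.Nil unfolding pe' pe'' by (simp add: pe algebra_simps tr0_def rm_eq)
  next
    case c
    with par_ge[of i] i have "m \<le> par i" by auto
    have "ind (m + n \<le> par i) = 1 - ind (m + n \<le> i)" using c i n2 unfolding par_def by (auto simp: ind_def)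
    moreover have "i \<noteq> m - 1" "\<not> i < m" "\<not> i < m - 1" using c n2 by linarith+
    ultimately show ?thesis using c \<open>m \<le> par i\<close> unfolding sN tl list.map prod.case sum_list.Cons sum_list.Nil unfolding pe' pe'' by (simp add: pe algebra_simps tr0_def)
  qed
qed

lemma col6: assumes i: "i < N" and j: "m + n < j" "j < N - 1" shows "LHS i j = RHS i j"
proof -
  have jN: "j < N" using j n2 by simp
  have ne: "j \<noteq> m - 1" "j \<noteq> m" "j \<noteq> m + n" "j \<noteq> N - 1" "\<not> j < m - 1" "\<not> j < m + n" using j n2 by linarith+
  have sN: "(\<Sum>k = 0..<N. pe k j) = 0" "(\<Sum>k = 0..<m. pe k j) = 0"
    using sumN[OF jN] sumM[OF jN] ne by simp_all
  have tl: "tl j = [(j, 4 * real n - 2), (j - n, 1), (j + 1 - n, -1)]" "tc j = 0" using j ne unfolding tl_def tc_def by auto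
  have pe: "pe x j = ind (x = j) - ind (x = j + 1)" for x using pe6[OF j] .
  have pa: "pe x (j - n) = ind (x = j - n) - ind (x = j)" for x using pe4[of "j - n" x] j n2 by simp
  have pb: "pe x (j + 1 - n) = ind (x = j + 1 - n) - ind (x = j + 1)" for x using pe4[of "j + 1 - n" x] j n2 by simp
  show ?thesis
  proof (cases "i < m")
    case True
    hence "i \<noteq> j" "i \<noteq> j + 1" "i \<noteq> j - n" "i \<noteq> j + 1 - n" using j by linarith+
    thus ?thesis using True unfolding sN tl list.map prod.case sum_list.Cons sum_list.Nil unfolding pa pb by (simp add: pe algebra_simps)
  next
    case False
    with par_ge[of i] i have pg: "m \<le> par i" "par i < N" by auto
    have "ind (par i = j) = ind (i = j - n)" "ind (par i = j + 1) = ind (i = j + 1 - n)"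
      using False i j n2 unfolding par_def by (auto simp: ind_def)
    thus ?thesis using False unfolding sN tl list.map prod.case sum_list.Cons sum_list.Nil unfolding pa pb by (simp add: pe algebra_simps tr0_def)
  qed
qed

lemma col7: assumes i: "i < N" and j: "j = N - 1" shows "LHS i j = RHS i j"
proof -
  have jN: "j < N" using j n2 by simp
  have ne: "j \<noteq> m - 1" "j \<noteq> m" "j \<noteq> m + n" using j n2 by linarith+
  have sN: "(\<Sum>k = 0..<N. pe k j) = 1" "(\<Sum>k = 0..<m. pe k j) = 0"
    using sumN[OF jN] sumM[OF jN] eqTrueI[OF j] ne by (simp_all only: if_True if_False simp_thms ind_simps)
  have tl: "tl j = [(m - 1, rm), (m, 1 - rm * b), (m + n - 1, 1), (N - 1, 4 * real n - 2)]" "tc j = 1"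
    using j ne n2 unfolding tl_def tc_def by auto
  have pe: "pe x j = ind (x = N - 1)" for x using pe7[OF j] .
  have pe7': "pe x (N - 1) = ind (x = N - 1)" for x using pe7 by simp
  have pe': "pe x (m - 1) = ind (x = m - 1) + b * ind (m \<le> x)" for x using pe2 by simp
  have pe'': "pe x m = ind (m \<le> x)" for x using pe3 by simp
  have pa: "pe x (m + n - 1) = ind (x = m + n - 1) - ind (x = N - 1)" for x
    using pe4[of "m + n - 1" x] n2 by simp
  show ?thesis using i
  proof (cases rule: icases)
    case a
    hence "i \<noteq> m - 1" "\<not> m \<le> i" "i < m" "i \<noteq> N - 1" "i \<noteq> m + n - 1" by linarith+
    thus ?thesis using a unfolding sN tl list.map prod.case sum_list.Cons sum_list.Nil unfolding pe' pe'' pa pe7' by (simp add: pe algebra_simps)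
  next
    case b
    hence "\<not> m \<le> i" "i < m" "\<not> i < m - 1" "i \<noteq> N - 1" "i \<noteq> m + n - 1" using n2 by linarith+
    thus ?thesis using b n2 unfolding sN tl list.map prod.case sum_list.Cons sum_list.Nil unfolding pe' pe'' pa pe7' by (simp add: pe algebra_simps tr0_def rm_eq)
  next
    case c
    with par_ge[of i] i have "m \<le> par i" by auto
    have "ind (par i = N - 1) = ind (i = m + n - 1)" using c i n2 unfolding par_def by (auto simp: ind_def)
    moreover have "i \<noteq> m - 1" "\<not> i < m" "\<not> i < m - 1" using c n2 by linarith+
    ultimately show ?thesis using c \<open>m \<le> par i\<close> unfolding sN tl list.map prod.case sum_list.Cons sum_list.Nil unfolding pe' pe'' pa pe7' by (simp add: pe algebra_simps tr0_def)
  qed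
qed

end

lemma upt_split3: "a \<le> b \<Longrightarrow> b \<le> c \<Longrightarrow> [a..<c] = [a..<b] @ [b..<c]"
  using upt_add_eq_append[of a b "c - b"] by simp

lemma map_const_upt: "(\<And>i. a \<le> i \<Longrightarrow> i < b \<Longrightarrow> f i = c) \<Longrightarrow> map f [a..<b] = replicate (b - a) c"
  by (rule nth_equalityI) auto

lemma sum_list_ind_zero: "(\<And>s c. (s, c) \<in> set L \<Longrightarrow> s \<noteq> k) \<Longrightarrow> sum_list (map (\<lambda>(s,c). c * ind (k = s)) L) = 0"
  by (induction L) (force simp: ind_def)+

context qm begin

definition "M0 = mat N N (\<lambda>(i,k). me i k)"
definition "Pm = mat N N (\<lambda>(i,j). pe i j)"
definition "Tm = mat N N (\<lambda>(i,j). te i j)"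

lemma MP: "M0 * Pm = Pm * Tm"
proof (rule eq_matI)
  fix i j assume i: "i < dim_row (Pm * Tm)" and j: "j < dim_col (Pm * Tm)"
  hence i: "i < N" and j: "j < N" by (auto simp: Pm_def Tm_def)
  have "(M0 * Pm) $$ (i,j) = (\<Sum>k = 0..<N. me i k * pe k j)"
    using i j by (simp add: M0_def Pm_def scalar_prod_def)
  also have "\<dots> = LHS i j" by (rule rowsum[OF i])
  also have "\<dots> = RHS i j" using j
  proof (cases rule: jcases)
    case c1 thus ?thesis using col1[OF i] by blast
  next
    case c2 thus ?thesis using col2[OF i] by blast
  next
    case c3 thus ?thesis using col3[OF i] by blast
  next
    case c4 thus ?thesis using col4[OF i] by blast
  next
    case c5 thus ?thesis using col5[OF i] by blast
  next
    case c6 thus ?thesis using col6[OF i] by blast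
  next
    case c7 thus ?thesis using col7[OF i] by blast
  qed
  also have "\<dots> = (\<Sum>k = 0..<N. pe i k * te k j)" by (rule rhs[OF i j, symmetric])
  also have "\<dots> = (Pm * Tm) $$ (i,j)"
    using i j by (simp add: Tm_def Pm_def scalar_prod_def)
  finally show "(M0 * Pm) $$ (i,j) = (Pm * Tm) $$ (i,j)" .
qed (auto simp: M0_def Pm_def Tm_def)

lemma pe_upper: assumes ij: "i < j" and j: "j < N" shows "pe i j = 0"
  using j
proof (cases rule: jcases)
  case c1 thus ?thesis using ij by (simp add: pe1)
next
  case c2 have "\<not> m \<le> i" "i \<noteq> m - 1" using c2 ij by linarith+
  thus ?thesis by (simp add: pe2[OF c2])
next
  case c3 have "\<not> m \<le> i" using c3 ij by linarith
  thus ?thesis by (simp add: pe3[OF c3])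
next
  case c4 thus ?thesis using ij by (simp add: pe4)
next
  case c5 have "\<not> m + n \<le> i" using c5 ij by linarith
  thus ?thesis unfolding pe5[OF c5] ind_def by (rule if_not_P)
next
  case c6 thus ?thesis using ij by (simp add: pe6)
next
  case c7 have "i \<noteq> N - 1" using c7 ij by linarith
  thus ?thesis by (simp add: pe7[OF c7])
qed

lemma pe_diag: assumes j: "j < N" shows "pe j j = 1"
  using j
proof (cases rule: jcases)
  case c1 thus ?thesis by (simp add: pe1)
next
  case c2 have "\<not> m \<le> j" using c2 n2 by linarith
  thus ?thesis using c2 by (simp add: pe2)
next
  case c3 thus ?thesis by (simp add: pe3)
next
  case c4 thus ?thesis by (simp add: pe4)
next
  case c5 thus ?thesis by (simp add: pe5)
next
  case c6 thus ?thesis by (simp add: pe6)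
next
  case c7 thus ?thesis by (simp add: pe7)
qed

lemma det_Pm: "det Pm = 1"
proof -
  have "det Pm = prod_list (diag_mat Pm)"
    by (rule det_lower_triangular[of N]) (auto simp: Pm_def pe_upper)
  also have "diag_mat Pm = replicate N 1"
    unfolding diag_mat_def by (rule nth_equalityI) (auto simp: Pm_def pe_diag)
  finally show ?thesis by simp
qed

lemma tl_le: "j < N \<Longrightarrow> (s, c) \<in> set (tl j) \<Longrightarrow> s \<le> j"
  using n2 unfolding tl_def by (auto split: if_splits; arith)

lemma tc_nz: "j < N \<Longrightarrow> tc j \<noteq> 0 \<Longrightarrow> m - 1 \<le> j"
  using n2 unfolding tc_def by (auto split: if_splits; arith)

lemma te_lower: assumes jk: "j < k" and j: "j < N" shows "te k j = 0"
proof -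
  have "tc j * ind (k < m - 1) = 0"
  proof (cases "tc j = 0")
    case False
    with tc_nz[OF j] jk have "\<not> k < m - 1" by linarith
    thus ?thesis by simp
  qed simp
  moreover have "sum_list (map (\<lambda>(s,c). c * ind (k = s)) (tl j)) = 0"
    by (rule sum_list_ind_zero) (use tl_le[OF j] jk in force)
  ultimately show ?thesis unfolding te_def by simp
qed

lemma upper_Tm: "upper_triangular Tm"
  unfolding upper_triangular_def by (auto simp: Tm_def te_lower)

definition dv :: "nat \<Rightarrow> real" where
  "dv j = (if j < m - 1 then 6 * real n - 8 else if j = m - 1 then l1 else if j = m then l2
     else if j \<le> m + n then 4 * real n - 4 else 4 * real n - 2)"

lemma tl1: "j < m - 1 \<Longrightarrow> tl j = [(j, 6 * real n - 8)] \<and> tc j = 0"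
proof -
  assume c: "j < m - 1"
  have ne: "j \<noteq> m - 1" "j \<noteq> m" "j \<noteq> m + n" "j \<noteq> N - 1" using c n2 by linarith+
  thus ?thesis using c unfolding tl_def tc_def by auto
qed

lemma tl2: "j = m - 1 \<Longrightarrow> tl j = [(m - 1, l1)] \<and> tc j = 2 + 2 * real n * b"
  unfolding tl_def tc_def by auto

lemma tl3: "j = m \<Longrightarrow> tl j = [(m - 1, 2 * real n * rm), (m, l2)] \<and> tc j = 2 * real n"
proof -
  assume c: "j = m"
  have ne: "j \<noteq> m - 1" "\<not> j < m - 1" using c n2 by linarith+
  thus ?thesis using c unfolding tl_def tc_def by auto
qed

lemma tl4: "m < j \<Longrightarrow> j < m + n \<Longrightarrow> tl j = [(j, 4 * real n - 4)] \<and> tc j = 0"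
proof -
  assume c: "m < j" "j < m + n"
  have ne: "j \<noteq> m - 1" "\<not> j < m - 1" "j \<noteq> m" "j \<noteq> m + n" "j \<noteq> N - 1" using c n2 by linarith+
  thus ?thesis using c unfolding tl_def tc_def by auto
qed

lemma tl5: "j = m + n \<Longrightarrow> tl j = [(m - 1, real n * rm), (m, real n + 1 - real n * rm * b), (j, 4 * real n - 4)] \<and> tc j = real n"
proof -
  assume c: "j = m + n"
  have ne: "j \<noteq> m - 1" "\<not> j < m - 1" "j \<noteq> m" "\<not> j < m + n" using c n2 by linarith+
  thus ?thesis using c unfolding tl_def tc_def by auto
qed

lemma tl6: "m + n < j \<Longrightarrow> j < N - 1 \<Longrightarrow> tl j = [(j, 4 * real n - 2), (j - n, 1), (j + 1 - n, -1)] \<and> tc j = 0"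
proof -
  assume c: "m + n < j" "j < N - 1"
  have ne: "j \<noteq> m - 1" "\<not> j < m - 1" "j \<noteq> m" "\<not> j < m + n" "j \<noteq> m + n" "j \<noteq> N - 1" using c n2 by linarith+
  thus ?thesis using c unfolding tl_def tc_def by auto
qed

lemma tl7: "j = N - 1 \<Longrightarrow> tl j = [(m - 1, rm), (m, 1 - rm * b), (m + n - 1, 1), (N - 1, 4 * real n - 2)] \<and> tc j = 1"
proof -
  assume c: "j = N - 1"
  have ne: "j \<noteq> m - 1" "\<not> j < m - 1" "j \<noteq> m" "\<not> j < m + n" "j \<noteq> m + n" "\<not> j < N - 1" using c n2 by linarith+
  have "tl j = [(m - 1, rm), (m, 1 - rm * b), (m + n - 1, 1), (N - 1, 4 * real n - 2)]"
    unfolding tl_def using ne by (simp only: if_not_P not_False_eq_True)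
  moreover have "tc j = 1" unfolding tc_def using ne c by (simp only: if_not_P if_P not_False_eq_True)
  ultimately show ?thesis by simp
qed

lemmas sl_simps = list.map prod.case sum_list.Cons sum_list.Nil

lemma indF: "\<not> P \<Longrightarrow> ind P = 0" by (simp add: ind_def)
lemma indT: "P \<Longrightarrow> ind P = 1" by (simp add: ind_def)

lemma te_diag: assumes j: "j < N" shows "te j j = dv j"
  using j
proof (cases rule: jcases)
  case c1
  have "dv j = 6 * real n - 8" unfolding dv_def using c1 by (rule if_P)
  thus ?thesis unfolding te_def using tl1[OF c1] by (simp add: indT)
next
  case c2
  have "dv j = l1" unfolding dv_def using n2 c2 by simp
  moreover have "ind (j < m - 1) = 0" "ind (j = m - 1) = 1" using c2 by (simp_all add: indT indF)
  ultimately show ?thesis unfolding te_def using tl2[OF c2] unfolding sl_simps by simp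
next
  case c3
  have ne: "j \<noteq> m - 1" "\<not> j < m - 1" using c3 n2 by linarith+
  have "dv j = l2" unfolding dv_def using ne c3 by (simp only: if_not_P if_P not_False_eq_True)
  moreover have "ind (j < m - 1) = 0" "ind (j = m - 1) = 0" "ind (j = m) = 1" using ne c3 by (simp_all add: indT indF)
  ultimately show ?thesis unfolding te_def using tl3[OF c3] unfolding sl_simps by simp
next
  case c4
  have ne: "j \<noteq> m - 1" "\<not> j < m - 1" "j \<noteq> m" "j \<le> m + n" using c4 n2 by linarith+
  have "dv j = 4 * real n - 4" unfolding dv_def using ne by (simp only: if_not_P if_P not_False_eq_True)
  thus ?thesis unfolding te_def using tl4[OF c4] unfolding sl_simps by (simp add: indT)
next
  case c5
  have ne: "j \<noteq> m - 1" "\<not> j < m - 1" "j \<noteq> m" "j \<le> m + n" using c5 n2 by linarith+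
  have "dv j = 4 * real n - 4" unfolding dv_def using ne by (simp only: if_not_P if_P not_False_eq_True)
  moreover have "ind (j < m - 1) = 0" "ind (j = m - 1) = 0" "ind (j = m) = 0" using ne by (simp_all add: indF)
  ultimately show ?thesis unfolding te_def using tl5[OF c5] unfolding sl_simps by (simp add: indT)
next
  case c6
  have ne: "j \<noteq> m - 1" "\<not> j < m - 1" "j \<noteq> m" "\<not> j \<le> m + n" "j \<noteq> j - n" "j \<noteq> j + 1 - n" using c6 n2 by linarith+
  have "dv j = 4 * real n - 2" unfolding dv_def using ne by (simp only: if_not_P if_P not_False_eq_True)
  moreover have "ind (j = j - n) = 0" "ind (j = j + 1 - n) = 0" using ne by (simp_all add: indF)
  ultimately show ?thesis unfolding te_def using tl6[OF c6] unfolding sl_simps by (simp add: indT)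
next
  case c7
  have ne: "j \<noteq> m - 1" "\<not> j < m - 1" "j \<noteq> m" "\<not> j \<le> m + n" "j \<noteq> m + n - 1" using c7 n2 by linarith+
  have "dv j = 4 * real n - 2" unfolding dv_def using ne by (simp only: if_not_P if_P not_False_eq_True)
  moreover have "ind (j < m - 1) = 0" "ind (j = m - 1) = 0" "ind (j = m) = 0" "ind (j = m + n - 1) = 0"
    using ne by (simp_all add: indF)
  moreover have "ind (j = N - 1) = 1" using c7 by (simp add: indT)
  ultimately show ?thesis unfolding te_def using tl7[OF c7] unfolding sl_simps by simp
qed

lemma mset_diag: "mset (diag_mat Tm) = replicate_mset (2 * n - 3) (6 * real n - 8) + {#l1#} + {#l2#}
   + replicate_mset n (4 * real n - 4) + replicate_mset (n - 1) (4 * real n - 2)"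
proof -
  define a1 where "a1 = m - 1"
  define a2 where "a2 = m"
  define a3 where "a3 = m + 1"
  define a4 where "a4 = m + n + 1"
  define a5 where "a5 = N"
  have le: "0 \<le> a1" "a1 \<le> a2" "a2 \<le> a3" "a3 \<le> a4" "a4 \<le> a5"
    unfolding a1_def a2_def a3_def a4_def a5_def using n2 by linarith+
  have d: "a2 = Suc a1" "a3 = Suc a2" "a1 = 2 * n - 3" "a4 - a3 = n" "a5 - a4 = n - 1"
    unfolding a1_def a2_def a3_def a4_def a5_def using n2 by linarith+
  have "diag_mat Tm = map dv [0..<N]"
    unfolding diag_mat_def by (auto simp: Tm_def te_diag)
  also have "[0..<N] = [0..<a1] @ [a1..<a2] @ [a2..<a3] @ [a3..<a4] @ [a4..<a5]"
  proof -
    have "a1 \<le> a5" "a2 \<le> a5" "a3 \<le> a5" using le by linarith+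
    hence "[0..<a5] = [0..<a1] @ [a1..<a5]" "[a1..<a5] = [a1..<a2] @ [a2..<a5]"
      "[a2..<a5] = [a2..<a3] @ [a3..<a5]" "[a3..<a5] = [a3..<a4] @ [a4..<a5]"
      using le upt_split3 by blast+
    thus ?thesis unfolding a5_def by simp
  qed
  also have "map dv ([0..<a1] @ [a1..<a2] @ [a2..<a3] @ [a3..<a4] @ [a4..<a5])
     = map dv [0..<a1] @ map dv [a1..<a2] @ map dv [a2..<a3] @ map dv [a3..<a4] @ map dv [a4..<a5]" by simp
  also have "map dv [0..<a1] = replicate (2 * n - 3) (6 * real n - 8)"
    unfolding d(3) by (subst map_const_upt[where c = "6 * real n - 8"]) (auto simp: dv_def)
  also have "map dv [a1..<a2] = [l1]"
  proof -
    have "dv a1 = l1" unfolding dv_def a1_def by simp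
    thus ?thesis unfolding d(1) by simp
  qed
  also have "map dv [a2..<a3] = [l2]"
  proof -
    have "a2 \<noteq> m - 1" "\<not> a2 < m - 1" "a2 = m" unfolding a2_def using n2 by linarith+
    hence "dv a2 = l2" unfolding dv_def by simp
    thus ?thesis unfolding d(2) by simp
  qed
  also have "map dv [a3..<a4] = replicate n (4 * real n - 4)"
  proof -
    have "map dv [a3..<a4] = replicate (a4 - a3) (4 * real n - 4)"
      by (subst map_const_upt[where c = "4 * real n - 4"]) (auto simp: dv_def a3_def a4_def)
    thus ?thesis using d(4) by simp
  qed
  also have "map dv [a4..<a5] = replicate (n - 1) (4 * real n - 2)"
  proof -
    have "map dv [a4..<a5] = replicate (a5 - a4) (4 * real n - 2)"
      by (subst map_const_upt[where c = "4 * real n - 2"]) (auto simp: dv_def a4_def a5_def)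
    thus ?thesis using d(5) by simp
  qed
  finally show ?thesis by (simp add: add.assoc)
qed

lemma char_poly_M0: "char_poly M0 = prod_mset (image_mset (\<lambda>a. [:- a, 1:])
   (replicate_mset (2 * n - 3) (6 * real n - 8) + {#l1#} + {#l2#}
   + replicate_mset n (4 * real n - 4) + replicate_mset (n - 1) (4 * real n - 2)))"
proof -
  have "char_poly M0 = char_poly Tm"
  proof (rule sim_char_poly[of _ N Pm])
    show "M0 \<in> carrier_mat N N" "Pm \<in> carrier_mat N N" "Tm \<in> carrier_mat N N"
      by (auto simp: M0_def Pm_def Tm_def)
  qed (auto simp: det_Pm MP)
  also have "\<dots> = (\<Prod>a\<leftarrow>diag_mat Tm. [:- a, 1:])"
    by (rule char_poly_upper_triangular[OF _ upper_Tm, of N]) (simp add: Tm_def)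
  also have "\<dots> = prod_mset (image_mset (\<lambda>a. [:- a, 1:]) (mset (diag_mat Tm)))"
    by (simp add: prod_mset_prod_list[symmetric])
  finally show ?thesis unfolding mset_diag .
qed

end

lemma arith1:
  fixes a b M :: nat assumes M: "M > 0"
  shows "((a + b) mod M = (b + (M - 1) * a) mod M) \<longleftrightarrow> (2 * a) mod M = 0"
proof -
  have tr: "(P mod M = Q mod M) \<longleftrightarrow> (int P mod int M = int Q mod int M)" for P Q by (metis of_nat_eq_iff zmod_int)
  have e: "int (b + (M - 1) * a) = int b + (int M - 1) * int a" using M by (simp add: of_nat_diff)
  have "((a + b) mod M = (b + (M - 1) * a) mod M) \<longleftrightarrow> (int a + int b) mod int M = (int b + (int M - 1) * int a) mod int M"
    unfolding tr e by simp
  also have "\<dots> \<longleftrightarrow> int M dvd ((int a + int b) - (int b + (int M - 1) * int a))" by (rule mod_eq_dvd_iff)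
  also have "(int a + int b) - (int b + (int M - 1) * int a) = 2 * int a + (- int a) * int M" by (simp add: algebra_simps)
  also have "int M dvd (2 * int a + (- int a) * int M) \<longleftrightarrow> int M dvd (2 * int a)" by (rule dvd_add_times_triv_right_iff)
  also have "\<dots> \<longleftrightarrow> (2 * a) mod M = 0" by (metis dvd_eq_mod_eq_0 int_dvd_int_iff of_nat_mult of_nat_numeral)
  finally show ?thesis .
qed

lemma arith2:
  fixes a b M :: nat assumes M: "M > 0"
  shows "((a + (M - 1) * b) mod M = (b + (M - 1) * a) mod M) \<longleftrightarrow> (2 * a) mod M = (2 * b) mod M"
proof -
  have tr: "(P mod M = Q mod M) \<longleftrightarrow> (int P mod int M = int Q mod int M)" for P Q by (metis of_nat_eq_iff zmod_int)
  have e: "int (b + (M - 1) * a) = int b + (int M - 1) * int a" "int (a + (M - 1) * b) = int a + (int M - 1) * int b"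
    using M by (simp_all add: of_nat_diff)
  have "((a + (M - 1) * b) mod M = (b + (M - 1) * a) mod M) \<longleftrightarrow> (int a + (int M - 1) * int b) mod int M = (int b + (int M - 1) * int a) mod int M"
    unfolding tr e by simp
  also have "\<dots> \<longleftrightarrow> int M dvd ((int a + (int M - 1) * int b) - (int b + (int M - 1) * int a))" by (rule mod_eq_dvd_iff)
  also have "(int a + (int M - 1) * int b) - (int b + (int M - 1) * int a) = (2 * int a - 2 * int b) + (int b - int a) * int M" by (simp add: algebra_simps)
  also have "int M dvd ((2 * int a - 2 * int b) + (int b - int a) * int M) \<longleftrightarrow> int M dvd (2 * int a - 2 * int b)" by (rule dvd_add_times_triv_right_iff)
  also have "\<dots> \<longleftrightarrow> (2 * int a) mod int M = (2 * int b) mod int M" by (rule mod_eq_dvd_iff[symmetric])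
  also have "\<dots> \<longleftrightarrow> (2 * a) mod M = (2 * b) mod M" by (metis of_nat_eq_iff of_nat_mult of_nat_numeral zmod_int)
  finally show ?thesis .
qed

lemma walk0: assumes "has_walk V E u v 0" shows "u = v"
proof -
  obtain p where p: "length p = Suc 0" "hd p = u" "last p = v" using assms unfolding has_walk_def by blast
  then obtain a where "p = [a]" by (cases p) auto
  thus ?thesis using p by simp
qed

lemma walk1: assumes "has_walk V E u v (Suc 0)" shows "E u v"
proof -
  obtain p where p: "length p = Suc (Suc 0)" "hd p = u" "last p = v" "\<forall>i<Suc 0. E (p ! i) (p ! Suc i)"
    using assms unfolding has_walk_def by blast
  then obtain a q where pq: "p = a # q" "length q = Suc 0" by (cases p) auto
  then obtain b where "q = [b]" by (cases q) auto
  hence "p = [a, b]" using pq by simp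
  thus ?thesis using p by auto
qed

lemma mk_walk0: "u \<in> V \<Longrightarrow> has_walk V E u u 0"
  unfolding has_walk_def by (rule exI[of _ "[u]"]) simp

lemma mk_walk1: "u \<in> V \<Longrightarrow> v \<in> V \<Longrightarrow> E u v \<Longrightarrow> has_walk V E u v (Suc 0)"
  unfolding has_walk_def by (rule exI[of _ "[u, v]"]) simp

lemma mk_walk2: assumes "u \<in> V" "v \<in> V" "w \<in> V" "E u w" "E w v" shows "has_walk V E u v 2"
  unfolding has_walk_def
proof (rule exI[of _ "[u, w, v]"], intro conjI allI impI)
  fix i :: nat assume "i < 2"
  hence "i = 0 \<or> i = 1" by auto
  thus "E ([u, w, v] ! i) ([u, w, v] ! Suc i)" using assms by auto
qed (use assms in auto)

lemma gd0: "u \<in> V \<Longrightarrow> graph_dist V E u u = 0"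
  unfolding graph_dist_def by (rule Least_eq_0) (rule mk_walk0)

lemma gd1: assumes "u \<in> V" "v \<in> V" "u \<noteq> v" "E u v" shows "graph_dist V E u v = 1"
  unfolding graph_dist_def
proof (rule Least_equality)
  show "has_walk V E u v 1" using mk_walk1 assms by simp
  fix k assume "has_walk V E u v k"
  thus "1 \<le> k" using walk0[of V E u v] assms by (cases k) auto
qed

lemma gd2: assumes "u \<in> V" "v \<in> V" "w \<in> V" "u \<noteq> v" "\<not> E u v" "E u w" "E w v" shows "graph_dist V E u v = 2"
  unfolding graph_dist_def
proof (rule Least_equality)
  show "has_walk V E u v 2" by (rule mk_walk2[OF assms(1,2,3,6,7)])
  fix k assume k: "has_walk V E u v k"
  show "2 \<le> k"
  proof (rule ccontr)
    assume "\<not> 2 \<le> k"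
    hence "k = 0 \<or> k = Suc 0" by auto
    thus False using k walk0[of V E u v] walk1[of V E u v] assms by auto
  qed
qed

locale qgrp = group G for G (structure) +
  fixes x y :: 'a and n :: nat
  assumes n2: "n \<ge> 2"
    and fin: "finite (carrier G)"
    and ord: "card (carrier G) = 4 * n"
    and xc: "x \<in> carrier G" and yc: "y \<in> carrier G"
    and gen: "generate G {x, y} = carrier G"
    and r1: "x [^] (2 * n) = \<one>"
    and r2: "x [^] n = y [^] (2::nat)"
    and r3: "y \<otimes> x = inv x \<otimes> y"
begin

lemma xp_mod: "x [^] (a::nat) = x [^] (a mod (2 * n))"
proof -
  have "x [^] a = x [^] (2 * n * (a div (2 * n)) + a mod (2 * n))" by simp
  also have "\<dots> = (x [^] (2 * n)) [^] (a div (2 * n)) \<otimes> x [^] (a mod (2 * n))"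
    using xc by (simp add: nat_pow_mult nat_pow_pow)
  finally show ?thesis using r1 xc by simp
qed

lemma y2: "y \<otimes> y = x [^] n"
  using r2 yc by (simp add: numeral_2_eq_2)

lemma yx: "y \<otimes> x [^] (k::nat) = inv (x [^] k) \<otimes> y"
proof (induction k)
  case 0 thus ?case using yc by simp
next
  case (Suc k)
  have "y \<otimes> x [^] Suc k = (y \<otimes> x [^] k) \<otimes> x" using xc yc by (simp add: m_assoc)
  also have "\<dots> = inv (x [^] k) \<otimes> (y \<otimes> x)" using Suc xc yc by (simp add: m_assoc)
  also have "\<dots> = (inv (x [^] k) \<otimes> inv x) \<otimes> y" using r3 xc yc by (simp add: m_assoc)
  also have "inv (x [^] k) \<otimes> inv x = inv (x \<otimes> x [^] k)" using xc by (simp add: inv_mult_group)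
  finally show ?case by (simp only: nat_pow_Suc2[OF xc, symmetric])
qed

lemma xinv: "inv (x [^] (k::nat)) = x [^] ((2 * n - 1) * k)"
proof (rule inv_equality)
  have "x [^] ((2 * n - 1) * k) \<otimes> x [^] k = x [^] ((2 * n - 1) * k + k)" using xc by (simp add: nat_pow_mult)
  also have "(2 * n - 1) * k + k = (2 * n) * k" using n2 by (simp add: algebra_simps)
  also have "x [^] ((2 * n) * k) = \<one>" using r1 xc by (simp add: nat_pow_pow[symmetric])
  finally show "x [^] ((2 * n - 1) * k) \<otimes> x [^] k = \<one>" .
qed (use xc in auto)

definition E :: "'a set" where "E = {g. \<exists>k. g = x [^] (k::nat)} \<union> {g. \<exists>k. g = x [^] (k::nat) \<otimes> y}"

lemma E_mult: assumes a: "a \<in> E" and b: "b \<in> E" shows "a \<otimes> b \<in> E"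
proof -
  have ym: "x [^] (k::nat) \<otimes> y \<otimes> x [^] (l::nat) = x [^] (k + (2 * n - 1) * l) \<otimes> y" for k l
  proof -
    have "x [^] k \<otimes> y \<otimes> x [^] l = x [^] k \<otimes> (y \<otimes> x [^] l)" using xc yc by (simp add: m_assoc)
    also have "\<dots> = x [^] k \<otimes> x [^] ((2 * n - 1) * l) \<otimes> y" unfolding yx xinv using xc yc by (simp add: m_assoc)
    finally show ?thesis using xc by (simp add: nat_pow_mult)
  qed
  from a obtain k :: nat where k: "a = x [^] k \<or> a = x [^] k \<otimes> y" unfolding E_def by auto
  from b obtain l :: nat where l: "b = x [^] l \<or> b = x [^] l \<otimes> y" unfolding E_def by auto
  from k l show ?thesis
  proof (elim disjE)
    assume "a = x [^] k" "b = x [^] l"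
    thus ?thesis using xc unfolding E_def by (auto simp: nat_pow_mult)
  next
    assume "a = x [^] k" "b = x [^] l \<otimes> y"
    thus ?thesis using xc yc unfolding E_def by (auto simp: nat_pow_mult m_assoc[symmetric])
  next
    assume "a = x [^] k \<otimes> y" "b = x [^] l"
    thus ?thesis using ym unfolding E_def by auto
  next
    assume "a = x [^] k \<otimes> y" "b = x [^] l \<otimes> y"
    hence "a \<otimes> b = x [^] (k + (2 * n - 1) * l) \<otimes> y \<otimes> y" using ym xc yc by (simp add: m_assoc[symmetric])
    also have "\<dots> = x [^] (k + (2 * n - 1) * l) \<otimes> x [^] n" using y2 xc yc by (simp add: m_assoc)
    also have "\<dots> = x [^] (k + (2 * n - 1) * l + n)" using xc by (simp add: nat_pow_mult)
    finally show ?thesis unfolding E_def by auto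
  qed
qed

lemma carrier_E: "carrier G \<subseteq> E"
proof
  fix g assume "g \<in> carrier G"
  hence "g \<in> generate G {x, y}" using gen by simp
  thus "g \<in> E"
  proof (induction rule: generate.induct)
    case one
    have "\<one> = x [^] (0::nat)" by simp
    thus ?case unfolding E_def by blast
  next
    case (incl h)
    have "x = x [^] (1::nat)" "y = x [^] (0::nat) \<otimes> y" using xc yc by auto
    thus ?case using incl unfolding E_def by blast
  next
    case (inv h)
    have "inv x = x [^] (2 * n - 1)" using xinv[of 1] xc by simp
    moreover have "inv y = x [^] n \<otimes> y"
    proof (rule inv_equality)
      show "x [^] n \<otimes> y \<otimes> y = \<one>" using y2 xc yc r1 by (simp add: m_assoc nat_pow_mult mult_2[symmetric])
    qed (use xc yc in auto)
    ultimately show ?case using inv unfolding E_def by blast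
  next
    case (eng h1 h2)
    thus ?case by (blast intro: E_mult)
  qed
qed

definition psi :: "nat \<Rightarrow> 'a" where "psi k = (if k < 2 * n then x [^] k else x [^] (k - 2 * n) \<otimes> y)"

lemma carrier_psi: "carrier G = psi ` {..<4 * n}"
proof
  show "carrier G \<subseteq> psi ` {..<4 * n}"
  proof
    fix g assume "g \<in> carrier G"
    hence "g \<in> E" using carrier_E by auto
    then obtain k :: nat where "g = x [^] k \<or> g = x [^] k \<otimes> y" unfolding E_def by blast
    thus "g \<in> psi ` {..<4 * n}"
    proof
      assume g: "g = x [^] k"
      have "k mod (2 * n) < 2 * n" using n2 by simp
      hence "g = psi (k mod (2 * n))" "k mod (2 * n) < 4 * n" using g xp_mod[of k] unfolding psi_def by auto
      thus ?thesis by blast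
    next
      assume g: "g = x [^] k \<otimes> y"
      have "k mod (2 * n) < 2 * n" using n2 by simp
      hence "g = psi (2 * n + k mod (2 * n))" "2 * n + k mod (2 * n) < 4 * n" using g xp_mod[of k] unfolding psi_def by auto
      thus ?thesis by blast
    qed
  qed
  show "psi ` {..<4 * n} \<subseteq> carrier G" using xc yc unfolding psi_def by auto
qed

lemma psi_inj: "inj_on psi {..<4 * n}"
  by (rule eq_card_imp_inj_on) (use ord carrier_psi in auto)

lemma xeq: "a < 2 * n \<Longrightarrow> b < 2 * n \<Longrightarrow> x [^] (a::nat) = x [^] b \<Longrightarrow> a = b"
proof -
  assume ab: "a < 2 * n" "b < 2 * n" and eq: "x [^] a = x [^] b"
  have "psi a = psi b" using ab eq unfolding psi_def by simp
  moreover have "a \<in> {..<4 * n}" "b \<in> {..<4 * n}" using ab by auto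
  ultimately show "a = b" using psi_inj unfolding inj_on_def by blast
qed

lemma xyne: "a < 2 * n \<Longrightarrow> b < 2 * n \<Longrightarrow> x [^] (a::nat) \<noteq> x [^] b \<otimes> y"
proof
  assume ab: "a < 2 * n" "b < 2 * n" and eq: "x [^] a = x [^] b \<otimes> y"
  have "psi a = psi (2 * n + b)" using ab eq unfolding psi_def by simp
  moreover have "a < 4 * n" "2 * n + b < 4 * n" using ab by auto
  ultimately have "a = 2 * n + b" using psi_inj unfolding inj_on_def by blast
  thus False using ab by simp
qed

lemma xeq_iff: "x [^] (a::nat) = x [^] (b::nat) \<longleftrightarrow> a mod (2 * n) = b mod (2 * n)"
proof
  assume "x [^] a = x [^] b"
  hence "x [^] (a mod (2 * n)) = x [^] (b mod (2 * n))" using xp_mod by metis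
  thus "a mod (2 * n) = b mod (2 * n)" by (rule xeq[rotated 2]) (use n2 in auto)
next
  assume "a mod (2 * n) = b mod (2 * n)"
  thus "x [^] a = x [^] b" using xp_mod by metis
qed

lemma ym: "x [^] (k::nat) \<otimes> y \<otimes> x [^] (l::nat) = x [^] (k + (2 * n - 1) * l) \<otimes> y"
proof -
  have "x [^] k \<otimes> y \<otimes> x [^] l = x [^] k \<otimes> (y \<otimes> x [^] l)" using xc yc by (simp add: m_assoc)
  also have "\<dots> = x [^] k \<otimes> x [^] ((2 * n - 1) * l) \<otimes> y" unfolding yx xinv using xc yc by (simp add: m_assoc)
  finally show ?thesis using xc by (simp add: nat_pow_mult)
qed

lemma comm1: "x [^] (a::nat) \<otimes> (x [^] (b::nat) \<otimes> y) = (x [^] b \<otimes> y) \<otimes> x [^] a \<longleftrightarrow> (2 * a) mod (2 * n) = 0"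
proof -
  have "x [^] a \<otimes> (x [^] b \<otimes> y) = x [^] (a + b) \<otimes> y" using xc yc by (simp add: m_assoc[symmetric] nat_pow_mult)
  moreover have "(x [^] b \<otimes> y) \<otimes> x [^] a = x [^] (b + (2 * n - 1) * a) \<otimes> y" by (rule ym)
  ultimately have "x [^] a \<otimes> (x [^] b \<otimes> y) = (x [^] b \<otimes> y) \<otimes> x [^] a \<longleftrightarrow> x [^] (a + b) = x [^] (b + (2 * n - 1) * a)"
    using xc yc by simp
  also have "\<dots> \<longleftrightarrow> (a + b) mod (2 * n) = (b + (2 * n - 1) * a) mod (2 * n)" by (rule xeq_iff)
  also have "\<dots> \<longleftrightarrow> (2 * a) mod (2 * n) = 0" by (rule arith1) (use n2 in simp)
  finally show ?thesis .
qed

lemma comm2: "(x [^] (l::nat) \<otimes> y) \<otimes> (x [^] (k::nat) \<otimes> y) = (x [^] k \<otimes> y) \<otimes> (x [^] l \<otimes> y) \<longleftrightarrow> (2 * l) mod (2 * n) = (2 * k) mod (2 * n)"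
proof -
  have e: "(x [^] (a::nat) \<otimes> y) \<otimes> (x [^] (b::nat) \<otimes> y) = x [^] (a + (2 * n - 1) * b) \<otimes> y \<otimes> y" for a b
    using xc yc ym by (simp add: m_assoc[symmetric])
  have "(x [^] l \<otimes> y) \<otimes> (x [^] k \<otimes> y) = (x [^] k \<otimes> y) \<otimes> (x [^] l \<otimes> y) \<longleftrightarrow> x [^] (l + (2 * n - 1) * k) = x [^] (k + (2 * n - 1) * l)"
    unfolding e using xc yc by simp
  also have "\<dots> \<longleftrightarrow> (l + (2 * n - 1) * k) mod (2 * n) = (k + (2 * n - 1) * l) mod (2 * n)" by (rule xeq_iff)
  also have "\<dots> \<longleftrightarrow> (2 * l) mod (2 * n) = (2 * k) mod (2 * n)" by (rule arith2) (use n2 in simp)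
  finally show ?thesis .
qed

lemma pair_mod: assumes "l < 2 * n" "q < 2 * n"
  shows "((if l < n then l else l - n) = (if q < n then q else q - n)) \<longleftrightarrow> (q = l \<or> q = (if l < n then l + n else l - n))"
  using assms by (cases "l < n"; cases "q < n"; simp; linarith)

lemma mod2: "(2 * a) mod (2 * n) = 2 * (a mod n)" by (rule mod_mult_mult1)

lemma modn: assumes "l < 2 * n" shows "l mod n = (if l < n then l else l - n)"
proof (cases "l < n")
  case False
  hence "l mod n = (l - n) mod n" by (simp add: le_mod_geq)
  also have "\<dots> = l - n" using assms False by simp
  finally show ?thesis using False by simp
qed simp

lemma center_x: assumes a: "a < 2 * n" shows "x [^] a \<in> group_center G \<longleftrightarrow> (a = 0 \<or> a = n)"
proof
  assume "x [^] a \<in> group_center G"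
  hence "x [^] a \<otimes> (x [^] (0::nat) \<otimes> y) = (x [^] (0::nat) \<otimes> y) \<otimes> x [^] a"
    using yc unfolding group_center_def by auto
  hence "a mod n = 0" unfolding comm1 mod2 by simp
  thus "a = 0 \<or> a = n" unfolding modn[OF a] by (auto split: if_splits)
next
  assume a0: "a = 0 \<or> a = n"
  hence am: "(2 * a) mod (2 * n) = 0" by auto
  show "x [^] a \<in> group_center G" unfolding group_center_def
  proof (intro CollectI conjI ballI)
    show "x [^] a \<in> carrier G" using xc by simp
    fix g assume "g \<in> carrier G"
    hence "g \<in> E" using carrier_E by auto
    then obtain b :: nat where "g = x [^] b \<or> g = x [^] b \<otimes> y" unfolding E_def by blast
    thus "x [^] a \<otimes> g = g \<otimes> x [^] a"
    proof
      assume "g = x [^] b" thus ?thesis using xc by (simp add: nat_pow_comm)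
    next
      assume "g = x [^] b \<otimes> y" thus ?thesis using comm1 am by simp
    qed
  qed
qed

lemma center_xy: "x [^] (l::nat) \<otimes> y \<notin> group_center G"
proof
  assume "x [^] l \<otimes> y \<in> group_center G"
  hence "x [^] l \<otimes> y \<otimes> x [^] (1::nat) = x [^] (1::nat) \<otimes> (x [^] l \<otimes> y)"
    using xc unfolding group_center_def by auto
  hence "(2 * 1) mod (2 * n) = 0" using comm1[of 1 l] by simp
  thus False using n2 by simp
qed

abbreviation "mg \<equiv> 2 * n - 2"
abbreviation "Ng \<equiv> 4 * n - 2"

definition ex :: "nat \<Rightarrow> nat" where "ex i = (if i < n - 1 then i + 1 else i + 2)"
definition phi :: "nat \<Rightarrow> 'a" where "phi i = (if i < mg then x [^] ex i else x [^] (i - mg) \<otimes> y)"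

lemma ex_bounds: "i < mg \<Longrightarrow> 0 < ex i \<and> ex i < 2 * n \<and> ex i \<noteq> n"
  unfolding ex_def by auto

lemma ex_inj: "i < mg \<Longrightarrow> k < mg \<Longrightarrow> ex i = ex k \<Longrightarrow> i = k"
  unfolding ex_def by (auto split: if_splits)

lemma phi_carrier: "phi i \<in> carrier G" unfolding phi_def using xc yc by auto

lemma phi_inj: "inj_on phi {..<Ng}"
proof (rule inj_onI)
  fix i k assume i: "i \<in> {..<Ng}" and k: "k \<in> {..<Ng}" and eq: "phi i = phi k"
  show "i = k"
  proof (cases "i < mg")
    case True
    note ti = True
    show ?thesis
    proof (cases "k < mg")
      case True
      hence "x [^] ex i = x [^] ex k" using ti eq unfolding phi_def by simp
      hence "ex i = ex k" using xeq ex_bounds ti True by blast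
      thus ?thesis using ex_inj ti True by blast
    next
      case False
      hence "x [^] ex i = x [^] (k - mg) \<otimes> y" using ti eq unfolding phi_def by simp
      moreover have "k - mg < 2 * n" using k by auto
      ultimately show ?thesis using xyne ex_bounds ti by blast
    qed
  next
    case False
    note fi = False
    show ?thesis
    proof (cases "k < mg")
      case True
      hence "x [^] ex k = x [^] (i - mg) \<otimes> y" using fi eq unfolding phi_def by simp
      moreover have "i - mg < 2 * n" using i by auto
      ultimately show ?thesis using xyne ex_bounds True by blast
    next
      case False
      hence "x [^] (i - mg) \<otimes> y = x [^] (k - mg) \<otimes> y" using fi eq unfolding phi_def by simp
      hence "x [^] (i - mg) = x [^] (k - mg)" using xc yc by simp
      moreover have "i - mg < 2 * n" "k - mg < 2 * n" using i k by auto
      ultimately have "i - mg = k - mg" using xeq by blast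
      thus ?thesis using fi False by simp
    qed
  qed
qed

lemma phi_img: "phi ` {..<Ng} = nc_vertices G"
proof
  show "phi ` {..<Ng} \<subseteq> nc_vertices G"
  proof
    fix g assume "g \<in> phi ` {..<Ng}"
    then obtain i where i: "i < Ng" "g = phi i" by auto
    show "g \<in> nc_vertices G"
    proof (cases "i < mg")
      case True
      thus ?thesis using i center_x[of "ex i"] ex_bounds[of i] xc unfolding nc_vertices_def phi_def by auto
    next
      case False
      thus ?thesis using i center_xy xc yc unfolding nc_vertices_def phi_def by auto
    qed
  qed
  show "nc_vertices G \<subseteq> phi ` {..<Ng}"
  proof
    fix g assume g: "g \<in> nc_vertices G"
    hence "g \<in> carrier G" "g \<notin> group_center G" unfolding nc_vertices_def by auto
    then obtain s where s: "s < 4 * n" "g = psi s" using carrier_psi by auto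
    show "g \<in> phi ` {..<Ng}"
    proof (cases "s < 2 * n")
      case True
      hence gx: "g = x [^] s" using s unfolding psi_def by simp
      hence "s \<noteq> 0" "s \<noteq> n" using center_x[OF True] \<open>g \<notin> group_center G\<close> by auto
      define i where "i = (if s < n then s - 1 else s - 2)"
      have "i < mg" "ex i = s" unfolding i_def ex_def using True \<open>s \<noteq> 0\<close> \<open>s \<noteq> n\<close> by auto
      hence "phi i = g" "i < Ng" unfolding phi_def using gx by auto
      thus ?thesis by blast
    next
      case False
      hence gx: "g = x [^] (s - 2 * n) \<otimes> y" using s unfolding psi_def by simp
      have e: "\<not> (mg + (s - 2 * n) < mg)" "mg + (s - 2 * n) - mg = s - 2 * n" by auto
      have "phi (mg + (s - 2 * n)) = g" unfolding phi_def gx by (simp only: e if_False)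
      moreover have "mg + (s - 2 * n) < Ng" using s False n2 by linarith
      ultimately show ?thesis by blast
    qed
  qed
qed

lemma phi_comm: assumes i: "i < Ng" and k: "k < Ng"
  shows "(phi i \<otimes> phi k = phi k \<otimes> phi i) \<longleftrightarrow>
    (i < mg \<and> k < mg) \<or> (mg \<le> i \<and> mg \<le> k \<and> (k = i \<or> k = (if i < mg + n then i + n else i - n)))"
proof (cases "i < mg")
  case ti: True
  show ?thesis
  proof (cases "k < mg")
    case True thus ?thesis using ti xc by (simp add: phi_def nat_pow_comm)
  next
    case False
    have "phi i \<otimes> phi k \<noteq> phi k \<otimes> phi i"
      using ti False comm1[of "ex i" "k - mg"] ex_bounds[OF ti] unfolding phi_def mod2 by auto
    thus ?thesis using ti False by simp
  qed
next
  case fi: False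
  show ?thesis
  proof (cases "k < mg")
    case True
    have "phi k \<otimes> phi i \<noteq> phi i \<otimes> phi k"
      using fi True comm1[of "ex k" "i - mg"] ex_bounds[OF True] unfolding phi_def mod2 by auto
    thus ?thesis using fi True by auto
  next
    case False
    have "(phi i \<otimes> phi k = phi k \<otimes> phi i) \<longleftrightarrow> (i - mg) mod n = (k - mg) mod n"
      using fi False comm2[of "i - mg" "k - mg"] unfolding phi_def mod2 by simp
    also have "\<dots> \<longleftrightarrow> (k = i \<or> k = (if i < mg + n then i + n else i - n))"
    proof -
      define l where "l = i - mg"
      define q where "q = k - mg"
      have l: "l < 2 * n" "q < 2 * n" using i k unfolding l_def q_def by auto
      have iq: "i = mg + l" "k = mg + q" using fi False unfolding l_def q_def by auto
      have "(k = i) = (q = l)" unfolding iq by simp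
      moreover have "(k = (if i < mg + n then i + n else i - n)) = (q = (if l < n then l + n else l - n))"
        unfolding iq by (cases "l < n") auto
      ultimately show ?thesis unfolding l_def[symmetric] q_def[symmetric] modn[OF l(1)] modn[OF l(2)] pair_mod[OF l]
        by simp
    qed
    finally show ?thesis using fi False by simp
  qed
qed

abbreviation "pr i \<equiv> (if i < mg + n then i + n else i - n)"

lemma phi_V: "i < Ng \<Longrightarrow> phi i \<in> nc_vertices G" using phi_img by auto

lemma adj_phi: assumes i: "i < Ng" and k: "k < Ng"
  shows "nc_adj G (phi i) (phi k) \<longleftrightarrow> i \<noteq> k \<and> \<not> ((i < mg \<and> k < mg) \<or> (mg \<le> i \<and> mg \<le> k \<and> (k = i \<or> k = pr i)))"
proof -
  have "phi i = phi k \<longleftrightarrow> i = k" using phi_inj i k unfolding inj_on_def by auto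
  thus ?thesis unfolding nc_adj_def phi_comm[OF i k] using phi_V[OF i] phi_V[OF k] by blast
qed

lemma dist_phi: assumes i: "i < Ng" and k: "k < Ng"
  shows "graph_dist (nc_vertices G) (nc_adj G) (phi i) (phi k) =
    (if i = k then 0 else if (i < mg \<and> k < mg) \<or> (mg \<le> i \<and> mg \<le> k \<and> k = pr i) then 2 else 1)"
proof -
  have mN: "mg < Ng" "0 < mg" using n2 by auto
  show ?thesis
  proof (cases "i = k")
    case True thus ?thesis using gd0 phi_V[OF i] by simp
  next
    case ne: False
    have pne: "phi i \<noteq> phi k" using phi_inj i k ne unfolding inj_on_def by auto
    show ?thesis
    proof (cases "(i < mg \<and> k < mg) \<or> (mg \<le> i \<and> mg \<le> k \<and> k = pr i)")
      case C: True
      have nadj: "\<not> nc_adj G (phi i) (phi k)" using adj_phi[OF i k] C by blast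
      have "graph_dist (nc_vertices G) (nc_adj G) (phi i) (phi k) = 2"
      proof (cases "i < mg")
        case True
        hence "k < mg" using C by linarith
        have f: "i \<noteq> mg" "\<not> mg < mg" "\<not> mg \<le> i" "mg \<noteq> k" "\<not> mg \<le> k" using True \<open>k < mg\<close> by linarith+
        hence "nc_adj G (phi i) (phi mg)" "nc_adj G (phi mg) (phi k)"
          using adj_phi[OF i mN(1)] adj_phi[OF mN(1) k] by blast+
        thus ?thesis by (rule gd2[where E = "nc_adj G", OF phi_V[OF i] phi_V[OF k] phi_V[OF mN(1)] pne nadj])
      next
        case False
        hence "mg \<le> k" using C by linarith
        have z: "0 < Ng" using mN by simp
        have f: "i \<noteq> 0" "\<not> i < mg" "\<not> mg \<le> 0" "0 \<noteq> k" "\<not> k < mg" using False \<open>mg \<le> k\<close> mN by linarith+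
        have "nc_adj G (phi i) (phi 0)" "nc_adj G (phi 0) (phi k)"
          using adj_phi[OF i z] adj_phi[OF z k] f by blast+
        thus ?thesis by (rule gd2[where E = "nc_adj G", OF phi_V[OF i] phi_V[OF k] phi_V[OF z] pne nadj])
      qed
      thus ?thesis unfolding if_not_P[OF ne] if_P[OF C] .
    next
      case C: False
      hence "nc_adj G (phi i) (phi k)" using adj_phi[OF i k] ne by blast
      hence "graph_dist (nc_vertices G) (nc_adj G) (phi i) (phi k) = 1" by (rule gd1[where E = "nc_adj G", OF phi_V[OF i] phi_V[OF k] pne])
      thus ?thesis unfolding if_not_P[OF ne] if_not_P[OF C] .
    qed
  qed
qed
end

lemma d0_sym: assumes "qm n b l1 l2" and i: "i < 4 * n - 2" and k: "k < 4 * n - 2"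
  shows "qm.d0 n k i = qm.d0 n i k"
proof -
  interpret qm n b l1 l2 by fact
  have "(m \<le> k \<and> m \<le> i \<and> i = par k) = (m \<le> i \<and> m \<le> k \<and> k = par i)"
    using par_eq[OF _ i, of k] par_eq[OF _ k, of i] i k by auto
  thus ?thesis unfolding d0_def by (auto simp: ind_def)
qed

theorem theorem3p3:
  fixes G (structure) and x y :: 'a and n :: nat and t1 t2 :: real and vs :: "'a list"
  assumes grp: "group G"
    and n2: "n \<ge> 2"
    and fin: "finite (carrier G)"
    and ord: "card (carrier G) = 4 * n"
    and xy: "x \<in> carrier G" "y \<in> carrier G"
    and gen: "generate G {x, y} = carrier G"
    and r1: "x [^] (2 * n) = \<one>"
    and r2: "x [^] n = y [^] (2::nat)"
    and r3: "y \<otimes> x = inv x \<otimes> y"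
    and roots: "\<forall>s::real. (2 * real n - 2) * s\<^sup>2 + (- 4 * real n + 10) * s - 2 * real n
                  = (2 * real n - 2) * (s - t1) * (s - t2)"
    and vs: "distinct vs" "set vs = nc_vertices G"
  shows "char_poly (dist_signless_laplacian (nc_vertices G) (nc_adj G) vs)
       = poly_of_roots
           (replicate_mset n (4 * real n - 4)
            + replicate_mset (2 * n - 3) (6 * real n - 8)
            + replicate_mset (n - 1) (4 * real n - 2)
            + {# t1 * (2 * real n - 2) + (6 * real n - 2), t2 * (2 * real n - 2) + (6 * real n - 2) #})"
proof -
  have "qgrp G x y n" unfolding qgrp_def qgrp_axioms_def using grp n2 fin ord xy gen r1 r2 r3 by auto
  then interpret g: qgrp G x y n .
  have R0: "- 2 * real n = (2 * real n - 2) * t1 * t2" using spec[OF roots, of 0] by simp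
  have Rt1: "(2 * real n - 2) * t1\<^sup>2 + (- 4 * real n + 10) * t1 - 2 * real n = 0" using spec[OF roots, of t1] by simp
  have np: "2 * real n - 2 > 0" using n2 by simp
  have t1z: "t1 \<noteq> 0" using R0 n2 by auto
  define b where "b = 1 / ((2 * real n - 2) * t1)"
  define l1 where "l1 = t1 * (2 * real n - 2) + (6 * real n - 2)"
  define l2 where "l2 = t2 * (2 * real n - 2) + (6 * real n - 2)"
  have A1: "(l1 - (6 * real n - 2)) * b = 1" unfolding l1_def b_def using np t1z by (simp add: field_simps)
  have A2: "l1 = 10 * real n - 12 + 2 * real n * (2 * real n - 2) * b"
  proof -
    have "t1 * (l1 - (10 * real n - 12)) = 2 * real n" using Rt1 unfolding l1_def by (simp add: power2_eq_square algebra_simps)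
    hence "l1 - (10 * real n - 12) = 2 * real n / t1" using t1z by (simp add: field_simps)
    also have "\<dots> = 2 * real n * (2 * real n - 2) * b" unfolding b_def using np t1z by (simp add: field_simps)
    finally show ?thesis by simp
  qed
  have A3: "l2 = 6 * real n - 2 - 2 * real n * (2 * real n - 2) * b"
  proof -
    have "t2 * (2 * real n - 2) = - 2 * real n / t1" using R0 t1z by (simp add: field_simps)
    also have "\<dots> = - (2 * real n * (2 * real n - 2) * b)" unfolding b_def using np t1z by (simp add: field_simps)
    finally show ?thesis unfolding l2_def by simp
  qed
  have qmI: "qm n b l1 l2" unfolding qm_def using n2 A1 A2 A3 by auto
  interpret q: qm n b l1 l2 by (rule qmI)
  let ?V = "nc_vertices G" and ?E = "nc_adj G"
  let ?N = "4 * n - 2"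
  have phiV: "g.phi ` {..<?N} = ?V" by (rule g.phi_img)
  have lenvs: "length vs = ?N"
  proof -
    have "length vs = card (set vs)" using vs(1) by (simp add: distinct_card)
    also have "\<dots> = card (g.phi ` {..<?N})" using vs(2) phiV by simp
    also have "\<dots> = ?N" using g.phi_inj by (simp add: card_image)
    finally show ?thesis .
  qed
  define \<sigma> where "\<sigma> i = inv_into {..<?N} g.phi (vs ! i)" for i
  have sig: "\<sigma> i < ?N \<and> g.phi (\<sigma> i) = vs ! i" if i: "i < ?N" for i
  proof -
    have mem: "vs ! i \<in> g.phi ` {..<?N}" using i lenvs vs(2) phiV nth_mem by (metis)
    have "\<sigma> i \<in> {..<?N}" unfolding \<sigma>_def by (rule inv_into_into[OF mem])
    moreover have "g.phi (\<sigma> i) = vs ! i" unfolding \<sigma>_def by (rule f_inv_into_f[OF mem])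
    ultimately show ?thesis by simp
  qed
  have bij: "bij_betw \<sigma> {..<?N} {..<?N}"
  proof -
    have inj: "inj_on \<sigma> {..<?N}"
    proof (rule inj_onI)
      fix i j assume i: "i \<in> {..<?N}" and j: "j \<in> {..<?N}" and e: "\<sigma> i = \<sigma> j"
      hence "vs ! i = vs ! j" using sig[of i] sig[of j] by auto
      thus "i = j" using vs(1) i j lenvs by (simp add: nth_eq_iff_index_eq)
    qed
    moreover have sub: "\<sigma> ` {..<?N} \<subseteq> {..<?N}" using sig by auto
    moreover have "card (\<sigma> ` {..<?N}) = card {..<?N}" using inj by (simp add: card_image)
    ultimately have "\<sigma> ` {..<?N} = {..<?N}" by (metis card_subset_eq finite_lessThan)
    thus ?thesis using inj unfolding bij_betw_def by simp
  qed
  have dist: "real (graph_dist ?V ?E (g.phi i) (g.phi k)) = q.d0 i k" if i: "i < ?N" and k: "k < ?N" for i k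
  proof -
    have pe: "q.par i = (if i < 2 * n - 2 + n then i + n else i - n)" unfolding q.par_def by simp
    have pne: "q.par i \<noteq> i" using n2 unfolding q.par_def by auto
    show ?thesis
    proof (cases "i = k")
      case True thus ?thesis using g.dist_phi[OF i k] pne by (simp add: q.d0_def)
    next
      case False
      thus ?thesis unfolding g.dist_phi[OF i k] q.d0_def pe using False by (auto simp: ind_def)
    qed
  qed
  have trans: "real (transmission ?V ?E (g.phi i)) = q.tr0 i" if i: "i < ?N" for i
  proof -
    have "real (transmission ?V ?E (g.phi i)) = (\<Sum>u\<in>g.phi ` {..<?N}. real (graph_dist ?V ?E u (g.phi i)))"
      unfolding transmission_def phiV by simp
    also have "\<dots> = (\<Sum>k\<in>{..<?N}. real (graph_dist ?V ?E (g.phi k) (g.phi i)))"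
      by (rule sum.reindex[OF g.phi_inj, unfolded comp_def])
    also have "\<dots> = (\<Sum>k = 0..<?N. q.d0 i k)"
      using dist i d0_sym[OF qmI i] by (simp add: atLeast0LessThan)
    also have "\<dots> = q.tr0 i"
    proof -
      have ii: "(\<Sum>k = 0..<?N. ind (i = k)) = 1"
      proof -
        have "(\<Sum>k = 0..<?N. ind (i = k)) = (\<Sum>k = 0..<?N. ind (k = i))" by (rule sum.cong) (auto simp: ind_def)
        also have "\<dots> = ind (i < ?N)" by (rule sum_ind_eq')
        also have "\<dots> = 1" using i by simp
        finally show ?thesis .
      qed
      have "(\<Sum>k = 0..<?N. q.me i k * 1) = (\<Sum>k = 0..<?N. ind (i = k)) * q.tr0 i + (\<Sum>k = 0..<?N. q.d0 i k)"
        unfolding q.me_def by (simp add: sum.distrib sum_distrib_right)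
      hence "(\<Sum>k = 0..<?N. q.me i k * 1) = q.tr0 i + (\<Sum>k = 0..<?N. q.d0 i k)" unfolding ii by simp
      moreover have "(\<Sum>k = 0..<?N. q.me i k * 1) = q.tr0 i + real ?N + ind (i < 2 * n - 2) * (real (2 * n - 2) - 1) + ind (2 * n - 2 \<le> i) - 1"
        using q.rowsum[OF i, of "\<lambda>_. 1"] by simp
      ultimately have "(\<Sum>k = 0..<?N. q.d0 i k) = real ?N + ind (i < 2 * n - 2) * (real (2 * n - 2) - 1) + ind (2 * n - 2 \<le> i) - 1"
        by simp
      also have "\<dots> = q.tr0 i" using n2 unfolding q.tr0_def by (auto simp: ind_def of_nat_diff)
      finally show ?thesis .
    qed
    finally show ?thesis .
  qed
  have DQ: "dist_signless_laplacian ?V ?E vs = mat ?N ?N (\<lambda>(i,j). q.me (\<sigma> i) (\<sigma> j))"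
  proof (rule eq_matI)
    fix i j assume "i < dim_row (mat ?N ?N (\<lambda>(i,j). q.me (\<sigma> i) (\<sigma> j)))" "j < dim_col (mat ?N ?N (\<lambda>(i,j). q.me (\<sigma> i) (\<sigma> j)))"
    hence i: "i < ?N" and j: "j < ?N" by auto
    have ij: "(i = j) = (\<sigma> i = \<sigma> j)" using bij i j unfolding bij_betw_def inj_on_def by auto
    have "dist_signless_laplacian ?V ?E vs $$ (i,j) = (if i = j then real (transmission ?V ?E (vs ! i)) else 0) + real (graph_dist ?V ?E (vs ! i) (vs ! j))"
      unfolding dist_signless_laplacian_def using i j lenvs by simp
    also have "\<dots> = (if \<sigma> i = \<sigma> j then q.tr0 (\<sigma> i) else 0) + q.d0 (\<sigma> i) (\<sigma> j)"
    proof -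
      have t: "real (transmission ?V ?E (vs ! i)) = q.tr0 (\<sigma> i)" using trans[of "\<sigma> i"] sig[OF i] by simp
      have d: "real (graph_dist ?V ?E (vs ! i) (vs ! j)) = q.d0 (\<sigma> i) (\<sigma> j)" using dist[of "\<sigma> i" "\<sigma> j"] sig[OF i] sig[OF j] by simp
      show ?thesis unfolding t d ij ..
    qed
    also have "\<dots> = q.me (\<sigma> i) (\<sigma> j)" unfolding q.me_def by (simp add: ind_def)
    finally show "dist_signless_laplacian ?V ?E vs $$ (i,j) = mat ?N ?N (\<lambda>(i,j). q.me (\<sigma> i) (\<sigma> j)) $$ (i,j)"
      using i j by simp
  qed (auto simp: dist_signless_laplacian_def lenvs)
  have "char_poly (dist_signless_laplacian ?V ?E vs) = char_poly (mat ?N ?N (\<lambda>(i,j). q.me i j))"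
    unfolding DQ by (rule perm_char_poly[OF bij])
  also have "\<dots> = char_poly q.M0" unfolding q.M0_def by simp
  also have "\<dots> = prod_mset (image_mset (\<lambda>a. [:- a, 1:])
     (replicate_mset (2 * n - 3) (6 * real n - 8) + {#l1#} + {#l2#}
     + replicate_mset n (4 * real n - 4) + replicate_mset (n - 1) (4 * real n - 2)))"
    by (rule q.char_poly_M0)
  also have "(replicate_mset (2 * n - 3) (6 * real n - 8) + {#l1#} + {#l2#}
     + replicate_mset n (4 * real n - 4) + replicate_mset (n - 1) (4 * real n - 2))
     = (replicate_mset n (4 * real n - 4)
            + replicate_mset (2 * n - 3) (6 * real n - 8)
            + replicate_mset (n - 1) (4 * real n - 2)
            + {# t1 * (2 * real n - 2) + (6 * real n - 2), t2 * (2 * real n - 2) + (6 * real n - 2) #})"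
    unfolding l1_def l2_def by (simp add: ac_simps)
  finally show ?thesis unfolding poly_of_roots_def .
qed

end
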